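(* For every $n \ge 1$, $B^-_n(x) = x^n B^+_n(1/x)$.
   Context: A signed permutation of $[n]$ is a set $S = \{a_1, \dots, a_n\}$ with $a_i \in \{i, -i\}$, together with a bijection $w : S \to S$, written as the word $w(a_1) \cdots w(a_n)$. An index $i \in \{0, \dots, n-1\}$ is a $B$-descent if $w(a_i) > w(a_{i+1})$ in $\mathbb{Z}$, with the convention $w(a_0) = 0$; $\mathrm{des}_B(w)$ is the number of $B$-descents. $B^+_n(x)$ (resp. $B^-_n(x)$) is $\sum x^{\mathrm{des}_B(w)}$ over all signed permutations of $[n]$ with $w(a_n) > 0$ (resp. $w(a_n) < 0$). *)

theory Defs
  imports Complex_Main
begin

definition signed_sets :: "nat \<Rightarrow> int set set" where
  "signed_sets n = {S. \<exists>a::nat \<Rightarrow> int. (\<forall>i\<in>{1..n}. a i = int i \<or> a i = - int i) \<and> S = a ` {1..n}}"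

definition signed_perms :: "nat \<Rightarrow> (int set \<times> (int \<Rightarrow> int)) set" where
  "signed_perms n = {(S, w). S \<in> signed_sets n \<and> bij_betw w S S \<and> (\<forall>x. x \<notin> S \<longrightarrow> w x = x)}"

definition sel :: "int set \<Rightarrow> nat \<Rightarrow> int" where
  "sel S i = (THE x. x \<in> S \<and> \<bar>x\<bar> = int i)"

definition letter :: "int set \<times> (int \<Rightarrow> int) \<Rightarrow> nat \<Rightarrow> int" where
  "letter p i = (if i = 0 then 0 else snd p (sel (fst p) i))"

definition desB :: "nat \<Rightarrow> int set \<times> (int \<Rightarrow> int) \<Rightarrow> nat" where
  "desB n p = card {i \<in> {0..<n}. letter p i > letter p (Suc i)}"

definition Bplus :: "nat \<Rightarrow> real \<Rightarrow> real" where
  "Bplus n x = (\<Sum>p\<in>{p \<in> signed_perms n. letter p n > 0}. x ^ desB n p)"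

definition Bminus :: "nat \<Rightarrow> real \<Rightarrow> real" where
  "Bminus n x = (\<Sum>p\<in>{p \<in> signed_perms n. letter p n < 0}. x ^ desB n p)"

end

theory Submission
  imports Defs
begin

definition negp :: "int set \<times> (int \<Rightarrow> int) \<Rightarrow> int set \<times> (int \<Rightarrow> int)" where
  "negp p = (uminus ` fst p, \<lambda>a. if a \<in> uminus ` fst p then - snd p (- a) else a)"

lemma sel_eq:
  assumes "\<forall>i\<in>{1..n}. a i = int i \<or> a i = - int i" "i \<in> {1..n}"
  shows "sel (a ` {1..n}) i = a i"
  unfolding sel_def
proof (rule the_equality)
  show "a i \<in> a ` {1..n} \<and> \<bar>a i\<bar> = int i" using assms by force
next
  fix x assume "x \<in> a ` {1..n} \<and> \<bar>x\<bar> = int i"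
  then obtain j where j: "j \<in> {1..n}" "x = a j" "\<bar>a j\<bar> = int i" by auto
  then have "\<bar>a j\<bar> = int j" using assms(1) by force
  with j show "x = a i" by auto
qed

lemma negp_perm:
  assumes "p \<in> signed_perms n"
  shows "negp p \<in> signed_perms n"
proof -
  obtain S w where p: "p = (S, w)" by (cases p)
  from assms p obtain a where a: "\<forall>i\<in>{1..n}. a i = int i \<or> a i = - int i" "S = a ` {1..n}"
    and bw: "bij_betw w S S" and off: "\<forall>x. x \<notin> S \<longrightarrow> w x = x"
    by (auto simp: signed_perms_def signed_sets_def)
  have S': "uminus ` S = (\<lambda>i. - a i) ` {1..n}" using a by auto
  have ss: "uminus ` S \<in> signed_sets n"
    unfolding signed_sets_def using a S' by (intro CollectI exI[of _ "\<lambda>i. - a i"]) auto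
  have bij2: "bij_betw (\<lambda>b. if b \<in> uminus ` S then - w (- b) else b) (uminus ` S) (uminus ` S)"
  proof -
    have B: "bij_betw (uminus \<circ> (w \<circ> uminus)) (uminus ` S) (uminus ` S)"
    proof (rule bij_betw_trans[where B=S])
      show "bij_betw (w \<circ> uminus) (uminus ` S) S"
      proof (rule bij_betw_trans[OF _ bw])
        have "uminus ` uminus ` S = S" by (auto simp: image_image)
        then show "bij_betw uminus (uminus ` S) S" unfolding bij_betw_def inj_on_def by auto
      qed
      show "bij_betw uminus S (uminus ` S)" by (auto simp: bij_betw_def inj_on_def)
    qed
    have E: "\<And>b. b \<in> uminus ` S \<Longrightarrow> (uminus \<circ> (w \<circ> uminus)) b = (\<lambda>b. if b \<in> uminus ` S then - w (- b) else b) b"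
      by simp
    show ?thesis by (rule bij_betw_cong[THEN iffD1, OF E B])
  qed
  show ?thesis using ss bij2 unfolding signed_perms_def negp_def p fst_conv snd_conv by auto
qed

lemma negp_negp:
  assumes "p \<in> signed_perms n"
  shows "negp (negp p) = p"
proof -
  obtain S w where p: "p = (S, w)" by (cases p)
  from assms p have off: "\<forall>x. x \<notin> S \<longrightarrow> w x = x" by (auto simp: signed_perms_def)
  have "uminus ` uminus ` S = S" by (auto simp: image_image)
  moreover have "(\<lambda>a. if a \<in> S then - (if - a \<in> uminus ` S then - w (- (- a)) else - a) else a) = w"
    using off by (auto simp: fun_eq_iff image_iff)
  moreover have "(\<lambda>a. if a \<in> uminus ` uminus ` S then - (if - a \<in> uminus ` S then - w (- (- a)) else - a) else a) = w"
    using off by (auto simp: fun_eq_iff image_iff)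
  moreover have "negp (negp p) = (uminus`uminus`S, \<lambda>a. if a \<in> uminus`uminus`S then -(if -a \<in> uminus`S then - w(-(-a)) else -a) else a)"
    by (simp only: negp_def p fst_conv snd_conv)
  ultimately show ?thesis using p by simp
qed

lemma letter_facts:
  assumes "p \<in> signed_perms n"
  shows "\<forall>i\<le>n. letter (negp p) i = - letter p i"
    and "\<forall>i<n. letter p i \<noteq> letter p (Suc i)"
proof -
  obtain S w where p: "p = (S, w)" by (cases p)
  from assms p obtain a where a: "\<forall>i\<in>{1..n}. a i = int i \<or> a i = - int i" "S = a ` {1..n}"
    and bw: "bij_betw w S S"
    by (auto simp: signed_perms_def signed_sets_def)
  have S': "uminus ` S = (\<lambda>i. - a i) ` {1..n}" using a by auto
  have a': "\<forall>i\<in>{1..n}. - a i = int i \<or> - a i = - int i" using a by force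
  have selS: "\<And>i. i \<in> {1..n} \<Longrightarrow> sel S i = a i" using sel_eq[OF a(1)] a(2) by simp
  have selS': "\<And>i. i \<in> {1..n} \<Longrightarrow> sel (uminus ` S) i = - a i" using sel_eq[OF a'] S' by simp
  show "\<forall>i\<le>n. letter (negp p) i = - letter p i"
  proof (intro allI impI)
    fix i assume i: "i \<le> n"
    show "letter (negp p) i = - letter p i"
    proof (cases "i = 0")
      case True then show ?thesis by (simp add: letter_def)
    next
      case False
      then have "i \<in> {1..n}" using i by auto
      then show ?thesis using selS selS' a(2)
        by (auto simp: letter_def negp_def p)
    qed
  qed
  have wS: "\<And>x. x \<in> S \<Longrightarrow> w x \<in> S" using bw by (auto simp: bij_betw_def)
  have nz: "\<And>x. x \<in> S \<Longrightarrow> x \<noteq> 0" using a by force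
  have inj: "inj_on w S" using bw by (auto simp: bij_betw_def)
  show "\<forall>i<n. letter p i \<noteq> letter p (Suc i)"
  proof (intro allI impI)
    fix i assume i: "i < n"
    have inS: "a (Suc i) \<in> S" using a i by auto
    show "letter p i \<noteq> letter p (Suc i)"
    proof (cases "i = 0")
      case True
      then show ?thesis using selS[of 1] i wS[OF inS] nz[OF wS[OF inS]]
        by (auto simp: letter_def p)
    next
      case False
      then have ii: "i \<in> {1..n}" "Suc i \<in> {1..n}" using i by auto
      have inS2: "a i \<in> S" using a ii by auto
      have "\<bar>a i\<bar> = int i" "\<bar>a (Suc i)\<bar> = int (Suc i)" using a ii by force+
      then have "a i \<noteq> a (Suc i)" by auto
      then have "w (a i) \<noteq> w (a (Suc i))" using inj inS inS2 by (auto dest: inj_onD)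
      then show ?thesis using False selS ii by (auto simp: letter_def p)
    qed
  qed
qed

lemma desB_le: "desB n p \<le> n"
proof -
  have "desB n p \<le> card {0..<n}" unfolding desB_def by (rule card_mono) auto
  then show ?thesis by simp
qed

lemma desB_negp:
  assumes "p \<in> signed_perms n"
  shows "desB n (negp p) = n - desB n p"
proof -
  note L = letter_facts[OF assms]
  have "{i \<in> {0..<n}. letter (negp p) i > letter (negp p) (Suc i)}
        = {0..<n} - {i \<in> {0..<n}. letter p i > letter p (Suc i)}"
  proof -
    { fix i assume "i < n"
      then have "letter (negp p) i = - letter p i" "letter (negp p) (Suc i) = - letter p (Suc i)"
        "letter p i \<noteq> letter p (Suc i)" using L by auto
      then have "(letter (negp p) i > letter (negp p) (Suc i)) = (\<not> letter p i > letter p (Suc i))"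
        by auto }
    then show ?thesis by auto
  qed
  moreover have "card ({0..<n} - {i \<in> {0..<n}. letter p i > letter p (Suc i)}) = card {0..<n} - card {i \<in> {0..<n}. letter p i > letter p (Suc i)}"
    by (rule card_Diff_subset) auto
  ultimately show ?thesis unfolding desB_def by simp
qed

theorem lemma7p1:
  fixes n :: nat and x :: real
  assumes "n \<ge> 1" and "x \<noteq> 0"
  shows "Bminus n x = x ^ n * Bplus n (1 / x)"
proof -
  let ?P = "{p \<in> signed_perms n. letter p n > 0}"
  let ?M = "{p \<in> signed_perms n. letter p n < 0}"
  have bij: "bij_betw negp ?P ?M"
  proof (rule bij_betw_byWitness[where f' = negp])
    show "negp ` ?P \<subseteq> ?M" using negp_perm letter_facts(1) by fastforce
    show "negp ` ?M \<subseteq> ?P" using negp_perm letter_facts(1) by fastforce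
  qed (auto simp: negp_negp)
  have "Bminus n x = (\<Sum>p\<in>?P. x ^ desB n (negp p))"
    unfolding Bminus_def by (rule sum.reindex_bij_betw[OF bij, symmetric])
  also have "\<dots> = (\<Sum>p\<in>?P. x ^ n * (1 / x) ^ desB n p)"
  proof (rule sum.cong[OF refl])
    fix p assume "p \<in> ?P"
    then have d: "desB n (negp p) = n - desB n p" using desB_negp by auto
    have le: "desB n p \<le> n" by (rule desB_le)
    have "x ^ n = x ^ (n - desB n p) * x ^ desB n p" using le by (simp add: power_add[symmetric])
    then show "x ^ desB n (negp p) = x ^ n * (1 / x) ^ desB n p"
      using assms(2) by (simp add: d power_one_over)
  qed
  also have "\<dots> = x ^ n * Bplus n (1 / x)" unfolding Bplus_def by (simp add: sum_distrib_left)
  finally show ?thesis .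
qed

end
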